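(* There is no $e\in\mathsf{KAT}(\{x_1,x_2\},\emptyset)$ such that $O_e(L_1,L_2)=L_1\cap L_2$ for all finite $\Sigma,T$ and all $L_1,L_2\in\mathcal{G}(\Sigma,T)$.
   Context: For finite $T$, $\Sigma$: $\mathsf{BA}(T)$ Boolean expressions over $T$; $\mathsf{KAT}(\Sigma,T)$: $e::=b\in\mathsf{BA}(T)\mid p\in\Sigma\mid e+f\mid e\cdot f\mid e^*$. Atoms $\mathsf{At}_T=2^T$, $\alpha\le b$ meaning $b$ holds under the assignment making exactly the tests in $\alpha$ true. Guarded strings: words in $\mathsf{At}_T(\Sigma\mathsf{At}_T)^*$. $w'\alpha\diamond\alpha x'=w'\alpha x'$; $L\diamond K=\{w\diamond x:w\in L,x\in K,\text{defined}\}$; $L^{(0)}=\mathsf{At}_T$, $L^{(n+1)}=L\diamond L^{(n)}$, $L^{( * )}=\bigcup_nL^{(n)}$. $L(b)=\{\alpha:\alpha\le b\}$, $L(p)=\{\alpha p\beta\}$, $L(e+f)=L(e)\cup L(f)$, $L(ef)=L(e)\diamond L(f)$, $L(e^* )=L(e)^{( * )}$. $\mathcal{G}(\Sigma,T)$: guarded languages regular over alphabet $\mathsf{At}_T\cup\Sigma$. Substitution: for $\mathfrak{s}:\Sigma_0\to\mathcal{G}(\Sigma_1,T_1)$, $\mathfrak{t}:T_0\to\mathsf{BA}(T_1)$: $\beta\in\mathsf{At}_{T_1}$ is $\mathfrak{t}$-consistent with $\alpha\in\mathsf{At}_{T_0}$ if $\alpha\le t\iff\beta\le\mathfrak{t}(t)$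 for all $t\in T_0$; $\mathrm{apply}_{\mathfrak{t}}(L)=\{\beta_0p_0\cdots p_{n-1}\beta_n:\exists\alpha_0p_0\cdots p_{n-1}\alpha_n\in L,\ \beta_i\ \mathfrak{t}\text{-consistent with }\alpha_i\}$; $\mathrm{apply}^{\mathfrak{s}}(L)=\{\alpha_0\diamond w_0\diamond\alpha_1\diamond\cdots\diamond w_{n-1}\diamond\alpha_n:\alpha_0p_0\cdots p_{n-1}\alpha_n\in L,\ w_i\in\mathfrak{s}(p_i)\}$; $\mathrm{apply}^{\mathfrak{s}}_{\mathfrak{t}}=\mathrm{apply}^{\mathfrak{s}}\circ\mathrm{apply}_{\mathfrak{t}}$. For $e\in\mathsf{KAT}(\{x_1,\dots,x_n\},\{y_1,\dots,y_m\})$, the regular operation $O_e$ takes (for any finite $\Sigma,T$) $L_1,\dots,L_n\in\mathcal{G}(\Sigma,T)$ and $b_1,\dots,b_m\in\mathsf{BA}(T)$ and returns $\mathrm{apply}^{\mathfrak{s}}_{\mathfrak{t}}(L(e))$ where $\mathfrak{s}(x_i)=L_i$, $\mathfrak{t}(y_i)=b_i$. Here $m=0$, so $O_e(L_1,L_2)=\mathrm{apply}^{\mathfrak{s}}_{\mathfrak{t}}(L(e))$ with $\mathfrak{t}$ the empty map. *)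

theory Defs
  imports Main
begin

(* Primitive actions and primitive tests are both encoded as natural numbers;
   the finite sets Sigma, T are finite sets of naturals. *)

datatype bexp = BVar nat | BZero | BOne | BNot bexp | BAnd bexp bexp | BOr bexp bexp

(* alpha \<le> b : b holds under the assignment making exactly the tests in alpha true *)
fun beval :: "nat set \<Rightarrow> bexp \<Rightarrow> bool" where
  "beval \<alpha> (BVar t) = (t \<in> \<alpha>)"
| "beval \<alpha> BZero = False"
| "beval \<alpha> BOne = True"
| "beval \<alpha> (BNot b) = (\<not> beval \<alpha> b)"
| "beval \<alpha> (BAnd b c) = (beval \<alpha> b \<and> beval \<alpha> c)"
| "beval \<alpha> (BOr b c) = (beval \<alpha> b \<or> beval \<alpha> c)"

fun bvars :: "bexp \<Rightarrow> nat set" where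
  "bvars (BVar t) = {t}"
| "bvars BZero = {}"
| "bvars BOne = {}"
| "bvars (BNot b) = bvars b"
| "bvars (BAnd b c) = bvars b \<union> bvars c"
| "bvars (BOr b c) = bvars b \<union> bvars c"

datatype kat = KTest bexp | KPrim nat | KPlus kat kat | KSeq kat kat | KStar kat

fun wf_kat :: "nat set \<Rightarrow> nat set \<Rightarrow> kat \<Rightarrow> bool" where
  "wf_kat S T (KTest b) = (bvars b \<subseteq> T)"
| "wf_kat S T (KPrim p) = (p \<in> S)"
| "wf_kat S T (KPlus e f) = (wf_kat S T e \<and> wf_kat S T f)"
| "wf_kat S T (KSeq e f) = (wf_kat S T e \<and> wf_kat S T f)"
| "wf_kat S T (KStar e) = wf_kat S T e"

datatype sym = At "nat set" | Act nat

fun gs_tail :: "nat set \<Rightarrow> nat set \<Rightarrow> sym list \<Rightarrow> bool" where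
  "gs_tail S T [] = True"
| "gs_tail S T (Act p # At \<alpha> # w) = (p \<in> S \<and> \<alpha> \<subseteq> T \<and> gs_tail S T w)"
| "gs_tail S T _ = False"

fun is_gs :: "nat set \<Rightarrow> nat set \<Rightarrow> sym list \<Rightarrow> bool" where
  "is_gs S T (At \<alpha> # w) = (\<alpha> \<subseteq> T \<and> gs_tail S T w)"
| "is_gs S T _ = False"

definition atoms :: "nat set \<Rightarrow> sym list set" where
  "atoms T = {[At \<alpha>] | \<alpha>. \<alpha> \<subseteq> T}"

definition fuse :: "sym list set \<Rightarrow> sym list set \<Rightarrow> sym list set" where
  "fuse L K = {w @ tl x | w x. w \<in> L \<and> x \<in> K \<and> w \<noteq> [] \<and> x \<noteq> [] \<and>
                 (\<exists>\<alpha>. last w = At \<alpha> \<and> hd x = At \<alpha>)}"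

fun fpow :: "nat set \<Rightarrow> sym list set \<Rightarrow> nat \<Rightarrow> sym list set" where
  "fpow T L 0 = atoms T"
| "fpow T L (Suc n) = fuse L (fpow T L n)"

definition fstar :: "nat set \<Rightarrow> sym list set \<Rightarrow> sym list set" where
  "fstar T L = (\<Union>n. fpow T L n)"

fun klang :: "nat set \<Rightarrow> kat \<Rightarrow> sym list set" where
  "klang T (KTest b) = {[At \<alpha>] | \<alpha>. \<alpha> \<subseteq> T \<and> beval \<alpha> b}"
| "klang T (KPrim p) = {[At \<alpha>, Act p, At \<beta>] | \<alpha> \<beta>. \<alpha> \<subseteq> T \<and> \<beta> \<subseteq> T}"
| "klang T (KPlus e f) = klang T e \<union> klang T f"
| "klang T (KSeq e f) = fuse (klang T e) (klang T f)"
| "klang T (KStar e) = fstar T (klang T e)"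

datatype 'a rexp = RZero | ROne | RAtom 'a | RPlus "'a rexp" "'a rexp"
  | RTimes "'a rexp" "'a rexp" | RStar "'a rexp"

definition conc :: "'a list set \<Rightarrow> 'a list set \<Rightarrow> 'a list set" where
  "conc A B = {u @ v | u v. u \<in> A \<and> v \<in> B}"

fun cpow :: "'a list set \<Rightarrow> nat \<Rightarrow> 'a list set" where
  "cpow A 0 = {[]}"
| "cpow A (Suc n) = conc A (cpow A n)"

fun rlang :: "'a rexp \<Rightarrow> 'a list set" where
  "rlang RZero = {}"
| "rlang ROne = {[]}"
| "rlang (RAtom a) = {[a]}"
| "rlang (RPlus r s) = rlang r \<union> rlang s"
| "rlang (RTimes r s) = conc (rlang r) (rlang s)"
| "rlang (RStar r) = (\<Union>n. cpow (rlang r) n)"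

definition guarded_langs :: "nat set \<Rightarrow> nat set \<Rightarrow> sym list set set" where
  "guarded_langs S T = {L. (\<forall>w\<in>L. is_gs S T w) \<and>
      (\<exists>r. rlang r = L \<and>
         (\<forall>a \<in> rexp.set_rexp r. (\<exists>\<alpha>. a = At \<alpha> \<and> \<alpha> \<subseteq> T) \<or> (\<exists>p. a = Act p \<and> p \<in> S)))}"

definition t_consistent :: "nat set \<Rightarrow> (nat \<Rightarrow> bexp) \<Rightarrow> nat set \<Rightarrow> nat set \<Rightarrow> bool" where
  "t_consistent T0 tm \<alpha> \<beta> = (\<forall>t\<in>T0. (t \<in> \<alpha>) = beval \<beta> (tm t))"

fun sym_rel :: "nat set \<Rightarrow> nat set \<Rightarrow> (nat \<Rightarrow> bexp) \<Rightarrow> sym \<Rightarrow> sym \<Rightarrow> bool" where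
  "sym_rel T0 T1 tm (At \<alpha>) (At \<beta>) = (\<beta> \<subseteq> T1 \<and> t_consistent T0 tm \<alpha> \<beta>)"
| "sym_rel T0 T1 tm (Act p) (Act q) = (p = q)"
| "sym_rel T0 T1 tm _ _ = False"

definition apply_t :: "nat set \<Rightarrow> nat set \<Rightarrow> (nat \<Rightarrow> bexp) \<Rightarrow> sym list set \<Rightarrow> sym list set" where
  "apply_t T0 T1 tm L = {v. \<exists>w\<in>L. list_all2 (sym_rel T0 T1 tm) w v}"

fun subst_word :: "(nat \<Rightarrow> sym list set) \<Rightarrow> sym list \<Rightarrow> sym list set" where
  "subst_word s [At \<alpha>] = {[At \<alpha>]}"
| "subst_word s (At \<alpha> # Act p # w) = fuse (fuse {[At \<alpha>]} (s p)) (subst_word s w)"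
| "subst_word s _ = {}"

definition apply_s :: "(nat \<Rightarrow> sym list set) \<Rightarrow> sym list set \<Rightarrow> sym list set" where
  "apply_s s L = (\<Union>w\<in>L. subst_word s w)"

(* O_e for e \<in> KAT({x_1..x_n},{y_1..y_m}) with x_i, y_i encoded as the numbers i:
   O_e(L_1..L_n, b_1..b_m) = apply^s_t(L(e)) where s(x_i) = L_i, t(y_i) = b_i;
   the target test set is T1. *)
definition kat_op :: "nat \<Rightarrow> kat \<Rightarrow> (nat \<Rightarrow> sym list set) \<Rightarrow> (nat \<Rightarrow> bexp) \<Rightarrow> nat set \<Rightarrow> sym list set" where
  "kat_op m e Ls bs T1 = apply_s Ls (apply_t {1..m} T1 bs (klang {1..m} e))"

end

theory Submission
  imports Defs
begin

lemma gs_tail_app: "gs_tail S T t \<Longrightarrow> gs_tail S T u \<Longrightarrow> gs_tail S T (t @ u)"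
  by (induction S T t rule: gs_tail.induct) auto

lemma is_gs_cases: "is_gs S T w \<Longrightarrow> \<exists>a t. w = At a # t \<and> a \<subseteq> T \<and> gs_tail S T t"
  by (cases "(S,T,w)" rule: is_gs.cases) auto

lemma is_gs_fuse: "w \<in> fuse L K \<Longrightarrow> (\<forall>v\<in>L. is_gs S T v) \<Longrightarrow> (\<forall>v\<in>K. is_gs S T v) \<Longrightarrow> is_gs S T w"
proof -
  assume w: "w \<in> fuse L K" and L: "\<forall>v\<in>L. is_gs S T v" and K: "\<forall>v\<in>K. is_gs S T v"
  from w obtain u x where ux: "w = u @ tl x" "u \<in> L" "x \<in> K" unfolding fuse_def by blast
  from is_gs_cases[OF L[rule_format, OF ux(2)]] obtain a t where "u = At a # t" "a \<subseteq> T" "gs_tail S T t" by blast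
  moreover from is_gs_cases[OF K[rule_format, OF ux(3)]] obtain b t' where "x = At b # t'" "gs_tail S T t'" by blast
  ultimately show ?thesis using ux gs_tail_app by auto
qed

lemma klang_gs: "w \<in> klang {} e \<Longrightarrow> is_gs UNIV {} w"
proof (induction e arbitrary: w)
  case (KSeq e1 e2)
  then show ?case using is_gs_fuse[of w "klang {} e1" "klang {} e2"] by auto
next
  case (KStar e)
  have "\<forall>v\<in>fpow {} (klang {} e) n. is_gs UNIV {} v" for n
    by (induction n) (auto simp: atoms_def KStar.IH intro: is_gs_fuse)
  then show ?case using KStar.prems by (auto simp: fstar_def)
qed auto

lemma la2_id: "list_all2 (sym_rel {} {} tm) w v \<Longrightarrow> (\<forall>x\<in>set w. \<forall>a. x = At a \<longrightarrow> a = {}) \<Longrightarrow> v = w"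
proof (induction rule: list_all2_induct)
  case (Cons x xs y ys)
  then show ?case by (cases x; cases y) auto
qed simp

lemma la2_refl: "(\<forall>x\<in>set w. \<forall>a. x = At a \<longrightarrow> a = {}) \<Longrightarrow> list_all2 (sym_rel {} {} tm) w w"
proof (induction w)
  case (Cons x xs)
  then show ?case by (cases x) (auto simp: t_consistent_def)
qed simp

lemma gs_tail_atoms: "gs_tail S {} t \<Longrightarrow> (\<forall>x\<in>set t. \<forall>a. x = At a \<longrightarrow> a = {})"
  by (induction S "{}::nat set" t rule: gs_tail.induct) auto

lemma gs_atoms: "is_gs S {} w \<Longrightarrow> (\<forall>x\<in>set w. \<forall>a. x = At a \<longrightarrow> a = {})"
  using is_gs_cases gs_tail_atoms by fastforce

lemma apply_t_id: "apply_t {} {} tm (klang {} e) = klang {} e"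
proof
  show "apply_t {} {} tm (klang {} e) \<subseteq> klang {} e"
    unfolding apply_t_def using la2_id gs_atoms klang_gs by blast
  show "klang {} e \<subseteq> apply_t {} {} tm (klang {} e)"
    unfolding apply_t_def using la2_refl gs_atoms klang_gs by blast
qed

fun fa :: "sym \<Rightarrow> sym" where
  "fa (Act p) = Act 0" | "fa (At a) = At a"

lemma subst_one:
  "(\<forall>p. s p = {[At {}, Act 0, At {}]}) \<Longrightarrow> is_gs UNIV {} w \<Longrightarrow> subst_word s w = {map fa w}"
proof (induction s w rule: subst_word.induct)
  case (2 s a p w)
  have s: "s p = {[At {}, Act 0, At {}]}" using "2.prems" by simp
  from "2.prems"(2) obtain b w' where w: "w = At b # w'" "b = {}" "gs_tail UNIV {} w'"
    by (cases "(UNIV::nat set, {}::nat set, Act p # w)" rule: gs_tail.cases) auto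
  have a: "a = {}" using "2.prems" by simp
  have seq: "s = (\<lambda>_. {[At {}, Act 0, At {}]})" using "2.prems"(1) by auto
  have IH: "subst_word s w = {map fa w}" using "2.IH" "2.prems"(1) w by (simp add: seq)
  have f1: "fuse {[At {}]} (s p) = {[At {}, Act 0, At {}]}" unfolding s by (auto simp: fuse_def)
  have f2: "fuse {[At {}, Act 0, At {}]} {map fa w} = {[At {}, Act 0] @ map fa w}"
    using w by (auto simp: fuse_def)
  show ?case using IH w a f1 f2 by simp
qed (auto elim!: is_gs.elims gs_tail.elims)

lemma subst_sing:
  "subst_word s [At {}, Act p, At {}] = fuse (fuse {[At {}]} (s p)) {[At {}]}"
  by simp

lemma fa_At: "fa x = At a \<Longrightarrow> x = At a" by (cases x) auto
lemma fa_Act: "fa x = Act q \<Longrightarrow> \<exists>p. x = Act p" by (cases x) auto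
lemma fa_inv: "map fa w = [At {}, Act 0, At {}] \<Longrightarrow> \<exists>p. w = [At {}, Act p, At {}]"
  by (auto simp: map_eq_Cons_conv dest!: fa_At fa_Act)

theorem lemma5p7:
  shows "\<not> (\<exists>e. wf_kat {1, 2} {} e \<and>
           (\<forall>(S::nat set) (T::nat set) L1 L2.
              finite S \<longrightarrow> finite T \<longrightarrow>
              L1 \<in> guarded_langs S T \<longrightarrow> L2 \<in> guarded_langs S T \<longrightarrow>
              kat_op 0 e (\<lambda>i. if i = 1 then L1 else L2) (\<lambda>_. BZero) T = L1 \<inter> L2))"
proof
  assume "\<exists>e. wf_kat {1, 2} {} e \<and>
           (\<forall>(S::nat set) (T::nat set) L1 L2.
              finite S \<longrightarrow> finite T \<longrightarrow>
              L1 \<in> guarded_langs S T \<longrightarrow> L2 \<in> guarded_langs S T \<longrightarrow>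
              kat_op 0 e (\<lambda>i. if i = 1 then L1 else L2) (\<lambda>_. BZero) T = L1 \<inter> L2)"
  then obtain e where H: "\<And>S T L1 L2. finite S \<Longrightarrow> finite T \<Longrightarrow>
              L1 \<in> guarded_langs S T \<Longrightarrow> L2 \<in> guarded_langs S T \<Longrightarrow>
              kat_op 0 e (\<lambda>i. if i = 1 then L1 else L2) (\<lambda>_. BZero) T = L1 \<inter> L2" by blast
  define U where "U = {[At {}, Act 0, At {}]}"
  define V where "V = {[At {}]}"
  have U: "U \<in> guarded_langs {0} {}"
    unfolding guarded_langs_def U_def
    apply (auto)
    apply (rule exI[of _ "RTimes (RAtom (At {})) (RTimes (RAtom (Act 0)) (RAtom (At {})))"])
    apply (auto simp: conc_def)
    done
  have V: "V \<in> guarded_langs {0} {}"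
    unfolding guarded_langs_def V_def
    by (auto intro!: exI[of _ "RAtom (At {})"])
  have K: "kat_op 0 e s bs {} = apply_s s (klang {} e)" for s bs
    unfolding kat_op_def using apply_t_id by simp
  have C: "apply_s (\<lambda>i. U) (klang {} e) = U"
    using H[OF _ _ U U] K by simp
  then obtain w where w: "w \<in> klang {} e" "[At {}, Act 0, At {}] \<in> subst_word (\<lambda>i. U) w"
    unfolding apply_s_def U_def by auto
  have "subst_word (\<lambda>i. U) w = {map fa w}"
    using subst_one[of "\<lambda>i. U" w] klang_gs[OF w(1)] U_def by simp
  with w(2) have mw: "map fa w = [At {}, Act 0, At {}]" by simp
  then obtain p where wp: "w = [At {}, Act p, At {}]"
    using fa_inv[OF mw] by blast
  have A: "apply_s (\<lambda>i. if i = 1 then U else V) (klang {} e) = {}"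
    using H[OF _ _ U V] K by (simp add: U_def V_def)
  moreover have "subst_word (\<lambda>i. if i = 1 then U else V) w \<noteq> {}"
    unfolding wp subst_sing by (auto simp: fuse_def U_def V_def)
  ultimately show False using w(1) unfolding apply_s_def by blast
qed

end
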